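(* Let $G$ be a group, $A\le\operatorname{Aut}(G)$ with $|A|=n$, and $g\in G$. In the $n$-valued coset group $X=(G,A)$ let $z=\pi(g)$. Let $M\subseteq G$ be the submonoid generated by $\{a(g):a\in A\}$, and let $B^+(e,r)$ and $S^+(e,r)$ denote the set of elements of $M$ of word length at most $r$, respectively exactly $r$, with respect to the generators $\{a(g):a\in A\}$. Then for every $y\in X$ and every $r\ge 0$ the growth function $\xi_y(r)$ of the dynamic $T_z$ at $y$ satisfies $$\frac1n|S^+(e,r)|\le \xi_y(r)\le |B^+(e,r)|.$$
   Context: Coset group: for a group $G$ and finite $A\le\operatorname{Aut}(G)$ with $|A|=n$, $X=G/A$ is the set of $A$-orbits, $\pi:G\to X$ the projection, with $n$-valued multiplication $\pi(g)*\pi(h)=[\pi(g\,a(h)):a\in A]$ (an $n$-multi-set), extended to multi-sets elementwise with multiplicities; unit $\pi(e_G)$, inverse $\pi(g)\mapsto\pi(g^{-1})$. For $z\in X$, the dynamic $T_z:X\to\operatorname{Sym}^nX$ is $T_z(y)=y*z$, with iterates $T_z^0(y)=y$, $T_z^k(y)=T_z^{k-1}(y)*z$, so $T_z^r(y)=y*z*\dots*z$ ($r$ factors $z$). For a multi-set $N$, $\operatorname{Set}(N)$ is the set of distinct elements of $N$. The growth function is $\xi_y(r)=|\operatorname{Set}(T_z^r(y))|$. The word length in $M$ of $m$ is the minimal number of generators $a(g)$ whose product is $m$ (the identity has length $0$). *)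

theory Defs
  imports "HOL-Algebra.Algebra" "HOL-Library.Multiset"
begin

definition orb :: "('a \<Rightarrow> 'a) set \<Rightarrow> 'a \<Rightarrow> 'a set" where
  "orb A g = (\<lambda>a. a g) ` A"

definition coset_space :: "('a, 'm) monoid_scheme \<Rightarrow> ('a \<Rightarrow> 'a) set \<Rightarrow> 'a set set" where
  "coset_space G A = orb A ` carrier G"

text \<open>n-valued multiplication pi(g) * pi(h) = [pi(g a(h)) : a in A], computed on
  representatives (independent of the choice since A is a group of automorphisms).\<close>

definition cmul :: "('a, 'm) monoid_scheme \<Rightarrow> ('a \<Rightarrow> 'a) set \<Rightarrow> 'a set \<Rightarrow> 'a set \<Rightarrow> 'a set multiset" where
  "cmul G A x y =
     (let g = (SOME g. g \<in> carrier G \<and> orb A g = x);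
          h = (SOME h. h \<in> carrier G \<and> orb A h = y)
      in image_mset (\<lambda>a. orb A (g \<otimes>\<^bsub>G\<^esub> a h)) (mset_set A))"

definition cmul_mset :: "('a, 'm) monoid_scheme \<Rightarrow> ('a \<Rightarrow> 'a) set \<Rightarrow> 'a set multiset \<Rightarrow> 'a set \<Rightarrow> 'a set multiset" where
  "cmul_mset G A N z = sum_mset (image_mset (\<lambda>w. cmul G A w z) N)"

fun dyn_iter :: "('a, 'm) monoid_scheme \<Rightarrow> ('a \<Rightarrow> 'a) set \<Rightarrow> 'a set \<Rightarrow> nat \<Rightarrow> 'a set \<Rightarrow> 'a set multiset" where
  "dyn_iter G A z 0 y = {#y#}"
| "dyn_iter G A z (Suc k) y = cmul_mset G A (dyn_iter G A z k y) z"

definition growth :: "('a, 'm) monoid_scheme \<Rightarrow> ('a \<Rightarrow> 'a) set \<Rightarrow> 'a set \<Rightarrow> 'a set \<Rightarrow> nat \<Rightarrow> nat" where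
  "growth G A z y r = card (set_mset (dyn_iter G A z r y))"

definition word_prod :: "('a, 'm) monoid_scheme \<Rightarrow> 'a list \<Rightarrow> 'a" where
  "word_prod G ws = foldr (\<lambda>x y. x \<otimes>\<^bsub>G\<^esub> y) ws \<one>\<^bsub>G\<^esub>"

definition gen_monoid :: "('a, 'm) monoid_scheme \<Rightarrow> 'a set \<Rightarrow> 'a set" where
  "gen_monoid G S = {m. \<exists>ws. set ws \<subseteq> S \<and> word_prod G ws = m}"

definition word_length :: "('a, 'm) monoid_scheme \<Rightarrow> 'a set \<Rightarrow> 'a \<Rightarrow> nat" where
  "word_length G S m = (LEAST k. \<exists>ws. length ws = k \<and> set ws \<subseteq> S \<and> word_prod G ws = m)"

definition ball_plus :: "('a, 'm) monoid_scheme \<Rightarrow> 'a set \<Rightarrow> nat \<Rightarrow> 'a set" where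
  "ball_plus G S r = {m \<in> gen_monoid G S. word_length G S m \<le> r}"

definition sphere_plus :: "('a, 'm) monoid_scheme \<Rightarrow> 'a set \<Rightarrow> nat \<Rightarrow> 'a set" where
  "sphere_plus G S r = {m \<in> gen_monoid G S. word_length G S m = r}"

end

theory Submission
  imports Defs
begin

locale cg = group G for G :: "('a,'m) monoid_scheme" +
  fixes A :: "('a \<Rightarrow> 'a) set" and g :: 'a
  assumes sub: "subgroup A (AutoGroup G)" and finA: "finite A" and gG: "g \<in> carrier G"
begin

lemma A_auto: "a \<in> A \<Longrightarrow> a \<in> auto G"
  using subgroup.subset[OF sub] by (auto simp: AutoGroup_def BijGroup_def)

lemma A_hom: "a \<in> A \<Longrightarrow> x \<in> carrier G \<Longrightarrow> y \<in> carrier G \<Longrightarrow> a (x \<otimes>\<^bsub>G\<^esub> y) = a x \<otimes>\<^bsub>G\<^esub> a y"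
  using A_auto by (auto simp: auto_def hom_def)

lemma A_carr: "a \<in> A \<Longrightarrow> x \<in> carrier G \<Longrightarrow> a x \<in> carrier G"
  using A_auto by (auto simp: auto_def hom_def)

lemma A_Bij: "a \<in> A \<Longrightarrow> a \<in> Bij (carrier G)"
  using A_auto by (auto simp: auto_def)

lemma mult_A: "a \<in> A \<Longrightarrow> b \<in> A \<Longrightarrow> a \<otimes>\<^bsub>AutoGroup G\<^esub> b = compose (carrier G) a b"
  using A_Bij by (simp add: AutoGroup_def BijGroup_def)

lemma one_A: "\<one>\<^bsub>AutoGroup G\<^esub> = (\<lambda>x\<in>carrier G. x)"
  by (simp add: AutoGroup_def BijGroup_def)

lemma comp_A: "a \<in> A \<Longrightarrow> b \<in> A \<Longrightarrow> compose (carrier G) a b \<in> A"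
  using subgroup.m_closed[OF sub] mult_A by metis

lemma id_A: "(\<lambda>x\<in>carrier G. x) \<in> A"
  using subgroup.one_closed[OF sub] one_A by metis

lemma inv_A:
  assumes "a \<in> A"
  obtains a' where "a' \<in> A" "\<And>x. x \<in> carrier G \<Longrightarrow> a' (a x) = x"
    "\<And>x. x \<in> carrier G \<Longrightarrow> a (a' x) = x"
proof -
  interpret AG: group "AutoGroup G" by (rule AutoGroup)
  have aC: "a \<in> carrier (AutoGroup G)" using subgroup.subset[OF sub] assms by blast
  let ?b = "inv\<^bsub>AutoGroup G\<^esub> a"
  have bA: "?b \<in> A" using subgroup.m_inv_closed[OF sub assms] .
  have l: "compose (carrier G) ?b a = (\<lambda>x\<in>carrier G. x)"
    using AG.l_inv[OF aC] mult_A[OF bA assms] one_A by simp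
  have r: "compose (carrier G) a ?b = (\<lambda>x\<in>carrier G. x)"
    using AG.r_inv[OF aC] mult_A[OF assms bA] one_A by simp
  show ?thesis
  proof
    show "?b \<in> A" by (rule bA)
    fix x assume x: "x \<in> carrier G"
    show "?b (a x) = x" using fun_cong[OF l, of x] x by (simp add: compose_eq)
    show "a (?b x) = x" using fun_cong[OF r, of x] x by (simp add: compose_eq)
  qed
qed

lemma orb_eq:
  assumes "h \<in> carrier G" "k \<in> carrier G" "orb A k = orb A h"
  shows "\<exists>a\<in>A. k = a h"
proof -
  have "(\<lambda>x\<in>carrier G. x) k \<in> orb A k" using id_A unfolding orb_def by blast
  then have "k \<in> orb A h" using assms by simp
  then show ?thesis unfolding orb_def by blast
qed

lemma orb_shift:
  assumes a: "a \<in> A" and h: "h \<in> carrier G"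
  shows "orb A (a h) = orb A h"
proof -
  obtain a' where a': "a' \<in> A" "\<And>x. x \<in> carrier G \<Longrightarrow> a' (a x) = x"
    "\<And>x. x \<in> carrier G \<Longrightarrow> a (a' x) = x" using inv_A[OF a] by blast
  show ?thesis unfolding orb_def
  proof (intro equalityI subsetI)
    fix y assume "y \<in> (\<lambda>b. b (a h)) ` A"
    then obtain b where b: "b \<in> A" "y = b (a h)" by blast
    then have "y = compose (carrier G) b a h" using h by (simp add: compose_eq)
    then show "y \<in> (\<lambda>b. b h) ` A" using comp_A[OF b(1) a] by blast
  next
    fix y assume "y \<in> (\<lambda>b. b h) ` A"
    then obtain b where b: "b \<in> A" "y = b h" by blast
    then have "y = compose (carrier G) b a' (a h)" using h a' A_carr[OF a h] by (simp add: compose_eq)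
    then show "y \<in> (\<lambda>b. b (a h)) ` A" using comp_A[OF b(1) a'(1)] by blast
  qed
qed

lemma L_img:
  assumes d: "d \<in> A" and x: "x \<in> carrier G"
  shows "(\<lambda>a. a (d x)) ` A = (\<lambda>a. a x) ` A"
  using orb_shift[OF d x] unfolding orb_def .

lemma L_left:
  assumes d: "d \<in> A" and x: "x \<in> carrier G"
  shows "d ` ((\<lambda>a. a x) ` A) = (\<lambda>a. a x) ` A"
proof -
  obtain d' where d': "d' \<in> A" "\<And>x. x \<in> carrier G \<Longrightarrow> d' (d x) = x"
    "\<And>x. x \<in> carrier G \<Longrightarrow> d (d' x) = x" using inv_A[OF d] by blast
  show ?thesis
  proof (intro equalityI subsetI)
    fix y assume "y \<in> d ` ((\<lambda>a. a x) ` A)"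
    then obtain b where b: "b \<in> A" "y = d (b x)" by blast
    then have "y = compose (carrier G) d b x" using x by (simp add: compose_eq)
    then show "y \<in> (\<lambda>b. b x) ` A" using comp_A[OF d b(1)] by blast
  next
    fix y assume "y \<in> (\<lambda>b. b x) ` A"
    then obtain b where b: "b \<in> A" "y = b x" by blast
    then have "y = d (compose (carrier G) d' b x)" using x d' A_carr[OF b(1) x] by (simp add: compose_eq)
    then show "y \<in> d ` ((\<lambda>b. b x) ` A)" using comp_A[OF d'(1) b(1)] by blast
  qed
qed

abbreviation "S \<equiv> (\<lambda>a. a g) ` A"

lemma S_carr: "S \<subseteq> carrier G" using A_carr gG by blast

lemma cmul_lemma:
  assumes h: "h \<in> carrier G"
  shows "set_mset (cmul G A (orb A h) (orb A g)) = (\<lambda>s. orb A (h \<otimes>\<^bsub>G\<^esub> s)) ` S"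
proof -
  define h' where "h' = (SOME k. k \<in> carrier G \<and> orb A k = orb A h)"
  define g' where "g' = (SOME k. k \<in> carrier G \<and> orb A k = orb A g)"
  have h': "h' \<in> carrier G \<and> orb A h' = orb A h" unfolding h'_def
    by (rule someI[of _ h]) (simp add: h)
  have g': "g' \<in> carrier G \<and> orb A g' = orb A g" unfolding g'_def
    by (rule someI[of _ g]) (simp add: gG)
  obtain d where d: "d \<in> A" "h' = d h" using orb_eq[OF h] h' by blast
  obtain c where c: "c \<in> A" "g' = c g" using orb_eq[OF gG] g' by blast
  obtain d' where d': "d' \<in> A" "\<And>x. x \<in> carrier G \<Longrightarrow> d' (d x) = x"
    "\<And>x. x \<in> carrier G \<Longrightarrow> d (d' x) = x" using inv_A[OF d(1)] by blast
  have "set_mset (cmul G A (orb A h) (orb A g)) = (\<lambda>a. orb A (h' \<otimes>\<^bsub>G\<^esub> a g')) ` A"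
    unfolding cmul_def h'_def[symmetric] g'_def[symmetric] Let_def using finA by simp
  also have "\<dots> = (\<lambda>t. orb A (d h \<otimes>\<^bsub>G\<^esub> t)) ` ((\<lambda>a. a (c g)) ` A)" using d c by (simp add: image_image)
  also have "\<dots> = (\<lambda>t. orb A (d h \<otimes>\<^bsub>G\<^esub> t)) ` S" using L_img[OF c(1) gG] by simp
  also have "\<dots> = (\<lambda>t. orb A (h \<otimes>\<^bsub>G\<^esub> d' t)) ` S"
  proof (rule image_cong[OF refl])
    fix t assume t: "t \<in> S"
    then have tC: "t \<in> carrier G" using S_carr by blast
    have "d h \<otimes>\<^bsub>G\<^esub> t = d (h \<otimes>\<^bsub>G\<^esub> d' t)" using A_hom[OF d(1) h A_carr[OF d'(1) tC]] d'(3)[OF tC] by simp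
    then show "orb A (d h \<otimes>\<^bsub>G\<^esub> t) = orb A (h \<otimes>\<^bsub>G\<^esub> d' t)"
      using orb_shift[OF d(1)] h A_carr[OF d'(1) tC] by simp
  qed
  also have "\<dots> = (\<lambda>s. orb A (h \<otimes>\<^bsub>G\<^esub> s)) ` (d' ` S)" by (simp add: image_image)
  also have "\<dots> = (\<lambda>s. orb A (h \<otimes>\<^bsub>G\<^esub> s)) ` S" using L_left[OF d'(1) gG] by simp
  finally show ?thesis .
qed

definition W :: "nat \<Rightarrow> 'a set" where
  "W r = word_prod G ` {ws. length ws = r \<and> set ws \<subseteq> S}"

lemma wp_carr: "set ws \<subseteq> carrier G \<Longrightarrow> word_prod G ws \<in> carrier G"
  by (induction ws) (auto simp: word_prod_def)

lemma wp_snoc: "set ws \<subseteq> carrier G \<Longrightarrow> s \<in> carrier G \<Longrightarrow>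
   word_prod G (ws @ [s]) = word_prod G ws \<otimes>\<^bsub>G\<^esub> s"
proof (induction ws)
  case Nil then show ?case by (simp add: word_prod_def)
next
  case (Cons x xs)
  have "word_prod G (x # xs @ [s]) = x \<otimes>\<^bsub>G\<^esub> word_prod G (xs @ [s])" by (simp add: word_prod_def)
  also have "\<dots> = x \<otimes>\<^bsub>G\<^esub> (word_prod G xs \<otimes>\<^bsub>G\<^esub> s)" using Cons by simp
  also have "\<dots> = (x \<otimes>\<^bsub>G\<^esub> word_prod G xs) \<otimes>\<^bsub>G\<^esub> s" using Cons wp_carr[of xs] by (simp add: m_assoc)
  finally show ?case by (simp add: word_prod_def)
qed

lemma W_carr: "W r \<subseteq> carrier G"
  unfolding W_def using wp_carr S_carr by blast

lemma W_0: "W 0 = {\<one>\<^bsub>G\<^esub>}"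
proof -
  have "{ws. length ws = 0 \<and> set ws \<subseteq> S} = {[]}" by auto
  then show ?thesis by (simp add: W_def word_prod_def)
qed

lemma W_Suc: "W (Suc r) = (\<lambda>(w, s). w \<otimes>\<^bsub>G\<^esub> s) ` (W r \<times> S)"
proof (intro equalityI subsetI)
  fix x assume "x \<in> W (Suc r)"
  then obtain ws where ws: "length ws = Suc r" "set ws \<subseteq> S" "x = word_prod G ws" unfolding W_def by blast
  then obtain xs s where e: "ws = xs @ [s]" using length_Suc_conv_rev[of ws r] by blast
  have "x = word_prod G xs \<otimes>\<^bsub>G\<^esub> s" using ws e wp_snoc[of xs s] S_carr by auto
  moreover have "word_prod G xs \<in> W r" using ws e unfolding W_def by auto
  moreover have "s \<in> S" using ws e by auto
  ultimately show "x \<in> (\<lambda>(w, s). w \<otimes>\<^bsub>G\<^esub> s) ` (W r \<times> S)"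
    by (intro image_eqI[where x="(word_prod G xs, s)"]) auto
next
  fix x assume "x \<in> (\<lambda>(w, s). w \<otimes>\<^bsub>G\<^esub> s) ` (W r \<times> S)"
  then obtain w s where w: "w \<in> W r" "s \<in> S" "x = w \<otimes>\<^bsub>G\<^esub> s" by auto
  then obtain xs where xs: "length xs = r" "set xs \<subseteq> S" "w = word_prod G xs" unfolding W_def by auto
  have "set xs \<subseteq> carrier G" "s \<in> carrier G" using xs(2) w(2) S_carr by auto
  then have "x = word_prod G (xs @ [s])" using w xs(3) wp_snoc[of xs s] by simp
  then show "x \<in> W (Suc r)" unfolding W_def using xs w
    by (intro image_eqI[where x="xs @ [s]"]) auto
qed

lemma dyn_lemma:
  assumes h: "h \<in> carrier G"
  shows "set_mset (dyn_iter G A (orb A g) r (orb A h)) = (\<lambda>w. orb A (h \<otimes>\<^bsub>G\<^esub> w)) ` W r"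
proof (induction r)
  case 0 then show ?case using h by (simp add: W_0)
next
  case (Suc r)
  have "set_mset (dyn_iter G A (orb A g) (Suc r) (orb A h))
     = (\<Union>x\<in>set_mset (dyn_iter G A (orb A g) r (orb A h)). set_mset (cmul G A x (orb A g)))"
    by (simp add: cmul_mset_def)
  also have "\<dots> = (\<Union>w\<in>W r. set_mset (cmul G A (orb A (h \<otimes>\<^bsub>G\<^esub> w)) (orb A g)))"
    using Suc by simp
  also have "\<dots> = (\<Union>w\<in>W r. (\<lambda>s. orb A ((h \<otimes>\<^bsub>G\<^esub> w) \<otimes>\<^bsub>G\<^esub> s)) ` S)"
  proof (rule SUP_cong[OF refl])
    fix w assume "w \<in> W r"
    then have "h \<otimes>\<^bsub>G\<^esub> w \<in> carrier G" using h W_carr by blast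
    then show "set_mset (cmul G A (orb A (h \<otimes>\<^bsub>G\<^esub> w)) (orb A g))
        = (\<lambda>s. orb A ((h \<otimes>\<^bsub>G\<^esub> w) \<otimes>\<^bsub>G\<^esub> s)) ` S" by (rule cmul_lemma)
  qed
  also have "\<dots> = (\<lambda>w. orb A (h \<otimes>\<^bsub>G\<^esub> w)) ` W (Suc r)"
  proof (intro equalityI subsetI)
    fix x assume "x \<in> (\<Union>w\<in>W r. (\<lambda>s. orb A ((h \<otimes>\<^bsub>G\<^esub> w) \<otimes>\<^bsub>G\<^esub> s)) ` S)"
    then obtain w s where ws: "w \<in> W r" "s \<in> S" "x = orb A ((h \<otimes>\<^bsub>G\<^esub> w) \<otimes>\<^bsub>G\<^esub> s)" by blast
    then have "x = orb A (h \<otimes>\<^bsub>G\<^esub> (w \<otimes>\<^bsub>G\<^esub> s))" using h W_carr S_carr by (simp add: m_assoc subset_iff)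
    moreover have "w \<otimes>\<^bsub>G\<^esub> s \<in> W (Suc r)" unfolding W_Suc using ws
      by (intro image_eqI[where x="(w, s)"]) auto
    ultimately show "x \<in> (\<lambda>w. orb A (h \<otimes>\<^bsub>G\<^esub> w)) ` W (Suc r)" by blast
  next
    fix x assume "x \<in> (\<lambda>w. orb A (h \<otimes>\<^bsub>G\<^esub> w)) ` W (Suc r)"
    then obtain v where v: "v \<in> W (Suc r)" "x = orb A (h \<otimes>\<^bsub>G\<^esub> v)" by blast
    from v(1) obtain w s where ws0: "w \<in> W r" "s \<in> S" "v = w \<otimes>\<^bsub>G\<^esub> s"
      unfolding W_Suc by auto
    have ws: "w \<in> W r" "s \<in> S" "x = orb A (h \<otimes>\<^bsub>G\<^esub> (w \<otimes>\<^bsub>G\<^esub> s))" using ws0 v by auto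
    then have "x = orb A ((h \<otimes>\<^bsub>G\<^esub> w) \<otimes>\<^bsub>G\<^esub> s)" using h W_carr S_carr by (simp add: m_assoc subset_iff)
    then show "x \<in> (\<Union>w\<in>W r. (\<lambda>s. orb A ((h \<otimes>\<^bsub>G\<^esub> w) \<otimes>\<^bsub>G\<^esub> s)) ` S)" using ws by blast
  qed
  finally show ?case .
qed

lemma S_fin: "finite S" using finA by simp

lemma W_finite: "finite (W r)"
proof -
  have "finite {ws. set ws \<subseteq> S \<and> length ws = r}" by (rule finite_lists_length_eq[OF S_fin])
  moreover have "{ws. length ws = r \<and> set ws \<subseteq> S} = {ws. set ws \<subseteq> S \<and> length ws = r}" by auto
  ultimately show ?thesis unfolding W_def by simp
qed

lemma W_ball: "W r \<subseteq> ball_plus G S r"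
proof
  fix x assume "x \<in> W r"
  then obtain ws where ws: "length ws = r" "set ws \<subseteq> S" "x = word_prod G ws" unfolding W_def by blast
  have "x \<in> gen_monoid G S" unfolding gen_monoid_def using ws by blast
  moreover have "word_length G S x \<le> r" unfolding word_length_def
    by (rule Least_le) (use ws in blast)
  ultimately show "x \<in> ball_plus G S r" unfolding ball_plus_def by blast
qed

lemma in_W_length: "x \<in> gen_monoid G S \<Longrightarrow> x \<in> W (word_length G S x)"
proof -
  assume "x \<in> gen_monoid G S"
  then obtain ws where "set ws \<subseteq> S" "word_prod G ws = x" unfolding gen_monoid_def by blast
  then have "\<exists>k ws. length ws = k \<and> set ws \<subseteq> S \<and> word_prod G ws = x" by blast
  then have "\<exists>ws. length ws = word_length G S x \<and> set ws \<subseteq> S \<and> word_prod G ws = x"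
    unfolding word_length_def by (rule LeastI_ex)
  then show ?thesis unfolding W_def by blast
qed

lemma ball_finite: "finite (ball_plus G S r)"
proof (rule finite_subset)
  show "ball_plus G S r \<subseteq> (\<Union>k\<le>r. W k)"
    unfolding ball_plus_def using in_W_length by blast
  show "finite (\<Union>k\<le>r. W k)" using W_finite by blast
qed

lemma sphere_W: "sphere_plus G S r \<subseteq> W r"
  unfolding sphere_plus_def using in_W_length by blast

lemma fiber_bound:
  assumes h: "h \<in> carrier G"
  shows "card (W r) \<le> card ((\<lambda>w. orb A (h \<otimes>\<^bsub>G\<^esub> w)) ` W r) * card A"
proof -
  let ?f = "\<lambda>w. orb A (h \<otimes>\<^bsub>G\<^esub> w)"
  let ?I = "?f ` W r"
  have fib: "card {w \<in> W r. ?f w = x} \<le> card A" if x: "x \<in> ?I" for x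
  proof -
    obtain w0 where w0: "w0 \<in> W r" "x = ?f w0" using x by blast
    have w0C: "h \<otimes>\<^bsub>G\<^esub> w0 \<in> carrier G" using w0 W_carr h by blast
    have "{w \<in> W r. ?f w = x} \<subseteq> (\<lambda>a. inv\<^bsub>G\<^esub> h \<otimes>\<^bsub>G\<^esub> a (h \<otimes>\<^bsub>G\<^esub> w0)) ` A"
    proof
      fix w assume "w \<in> {w \<in> W r. ?f w = x}"
      then have w: "w \<in> W r" "?f w = ?f w0" using w0 by auto
      have wC: "w \<in> carrier G" using w W_carr by blast
      obtain a where a: "a \<in> A" "h \<otimes>\<^bsub>G\<^esub> w = a (h \<otimes>\<^bsub>G\<^esub> w0)"
        using orb_eq[OF w0C _ w(2)] h wC by blast
      have "w = inv\<^bsub>G\<^esub> h \<otimes>\<^bsub>G\<^esub> (h \<otimes>\<^bsub>G\<^esub> w)" using h wC by (simp add: m_assoc[symmetric])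
      then show "w \<in> (\<lambda>a. inv\<^bsub>G\<^esub> h \<otimes>\<^bsub>G\<^esub> a (h \<otimes>\<^bsub>G\<^esub> w0)) ` A" using a by auto
    qed
    then have "card {w \<in> W r. ?f w = x} \<le> card ((\<lambda>a. inv\<^bsub>G\<^esub> h \<otimes>\<^bsub>G\<^esub> a (h \<otimes>\<^bsub>G\<^esub> w0)) ` A)"
      using finA by (intro card_mono) auto
    also have "\<dots> \<le> card A" by (rule card_image_le[OF finA])
    finally show ?thesis .
  qed
  have "W r = (\<Union>x\<in>?I. {w \<in> W r. ?f w = x})" by blast
  then have "card (W r) = card (\<Union>x\<in>?I. {w \<in> W r. ?f w = x})" by simp
  also have "\<dots> \<le> (\<Sum>x\<in>?I. card {w \<in> W r. ?f w = x})" by (rule card_UN_le) (use W_finite in simp)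
  also have "\<dots> \<le> card ?I * card A" using sum_bounded_above[of ?I "\<lambda>x. card {w \<in> W r. ?f w = x}" "card A"] fib
    by simp
  finally show ?thesis .
qed

end

theorem mainTheorem4:
  fixes G :: "('a, 'm) monoid_scheme" and A :: "('a \<Rightarrow> 'a) set" and n :: nat and g :: 'a
  assumes "group G"
    and "subgroup A (AutoGroup G)"
    and "finite A" and "card A = n"
    and "g \<in> carrier G"
    and "y \<in> coset_space G A"
  shows "real (card (sphere_plus G ((\<lambda>a. a g) ` A) r)) / real n
           \<le> real (growth G A (orb A g) y r)
       \<and> growth G A (orb A g) y r \<le> card (ball_plus G ((\<lambda>a. a g) ` A) r)"
proof -
  interpret cg G A g using assms by (simp add: cg_def cg_axioms_def)
  obtain h where h: "h \<in> carrier G" "y = orb A h" using assms(6) unfolding coset_space_def by blast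
  let ?I = "(\<lambda>w. orb A (h \<otimes>\<^bsub>G\<^esub> w)) ` W r"
  have gr: "growth G A (orb A g) y r = card ?I"
    unfolding growth_def h(2) dyn_lemma[OF h(1)] ..
  have up: "card ?I \<le> card (ball_plus G S r)"
    using card_image_le[OF W_finite, of "\<lambda>w. orb A (h \<otimes>\<^bsub>G\<^esub> w)" r]
      card_mono[OF ball_finite W_ball, of r] by linarith
  have npos: "n > 0" using assms(4) id_A finA card_gt_0_iff by blast
  have "card (sphere_plus G S r) \<le> card (W r)" by (rule card_mono[OF W_finite sphere_W])
  also have "\<dots> \<le> card ?I * n" using fiber_bound[OF h(1)] assms(4) by simp
  finally have "real (card (sphere_plus G S r)) \<le> real (card ?I) * real n"
    by (metis of_nat_le_iff of_nat_mult)
  then have low: "real (card (sphere_plus G S r)) / real n \<le> real (card ?I)"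
    using npos by (simp add: divide_le_eq)
  show ?thesis using low up gr by simp
qed

end
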